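(* Let $A$ be a real $n\times n$ matrix and suppose there is $\kappa_0>0$ with $u^TAu\ge\kappa_0^2|u|^2$ for all $u\in\mathbb R^n$. (i) The map $u\mapsto Au$ is $2$-monotone. (ii) If $A$ is symmetric and $\alpha>0$, then $\widetilde F_{A,\alpha}(u)=|A^{1/2}u|^\alpha Au$ is $(\alpha+2)$-monotone. (iii) Let $F_{A,\alpha}(u)=|u|^\alpha Au$ with $\alpha>0$. If $\alpha=\kappa_0^2/\|A\|_{\mathrm{op}}$, then $F_{A,\alpha}$ is monotone; if $\alpha<\kappa_0^2/\|A\|_{\mathrm{op}}$, then $F_{A,\alpha}$ is $(\alpha+2)$-monotone.
   Context: $|\cdot|$ is the Euclidean norm, $\|A\|_{\mathrm{op}}=\max_{|x|=1}|Ax|$, and for symmetric positive definite $A$, $A^{1/2}$ is its symmetric positive definite square root. A map $F:\mathbb R^n\to\mathbb R^n$ is monotone if $(F(u)-F(v))\cdot(u-v)\ge0$ for all $u,v$; for $\beta>0$ it is $\beta$-monotone if there is $C>0$ with $(F(u)-F(v))\cdot(u-v)\ge C|u-v|^\beta$ for all $u,v$. *)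

theory Defs
  imports "HOL-Analysis.Analysis"
begin

definition monotone_map :: "(real^'n \<Rightarrow> real^'n) \<Rightarrow> bool" where
  "monotone_map F \<longleftrightarrow> (\<forall>u v. (F u - F v) \<bullet> (u - v) \<ge> 0)"

definition beta_monotone :: "real \<Rightarrow> (real^'n \<Rightarrow> real^'n) \<Rightarrow> bool" where
  "beta_monotone \<beta> F \<longleftrightarrow>
     (\<exists>C>0. \<forall>u v. (F u - F v) \<bullet> (u - v) \<ge> C * norm (u - v) powr \<beta>)"

definition sym_pos_def :: "real^'n^'n \<Rightarrow> bool" where
  "sym_pos_def B \<longleftrightarrow> transpose B = B \<and> (\<forall>x. x \<noteq> 0 \<longrightarrow> x \<bullet> (B *v x) > 0)"

definition matrix_sqrt :: "real^'n^'n \<Rightarrow> real^'n^'n" where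
  "matrix_sqrt A = (THE B. sym_pos_def B \<and> B ** B = A)"

definition op_norm :: "real^'n^'m \<Rightarrow> real" where
  "op_norm A = onorm (\<lambda>x. A *v x)"

end

theory Submission
  imports Defs
begin



lemma mv_inner_transpose: fixes A :: "real^'n^'m" shows "(A *v x) \<bullet> y = x \<bullet> (transpose A *v y)"
  unfolding inner_vec_def matrix_vector_mult_def transpose_def
  apply (simp add: inner_real_def sum_distrib_left sum_distrib_right)
  apply (subst sum.swap)
  apply (simp add: mult_ac)
  done

lemma mv_inner_sym: fixes A :: "real^'n^'n" shows "transpose A = A \<Longrightarrow> (A *v x) \<bullet> y = x \<bullet> (A *v y)"
  using mv_inner_transpose[of A x y] by simp

lemma op_norm_bound: "norm (A *v x) \<le> op_norm A * norm x"
  unfolding op_norm_def by (rule onorm[OF matrix_vector_mul_bounded_linear])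

lemma conc_ineq:
  fixes a b \<alpha> :: real
  assumes "0 < \<alpha>" "\<alpha> \<le> 1" "0 \<le> b" "b \<le> a"
  shows "(a powr \<alpha> - b powr \<alpha>) * b \<le> \<alpha> * a powr \<alpha> * (a - b)"
proof (cases "b = 0")
  case True
  have "0 \<le> \<alpha> * a powr \<alpha> * (a - b)" using assms by simp
  then show ?thesis using True by simp
next
  case False
  hence bp: "b > 0" using assms by simp
  define t where "t = a / b"
  have tp: "t > 0" using bp assms unfolding t_def by simp
  have a: "a = b * t" using bp unfolding t_def by simp
  have y: "t powr \<alpha> * 1 powr (1 - \<alpha>) \<le> \<alpha> * t + (1 - \<alpha>) * 1"
    by (rule Youngs_inequality_0) (use assms tp in auto)
  hence y': "t powr \<alpha> \<le> \<alpha> * t + (1 - \<alpha>)" by simp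
  have "a powr \<alpha> = b powr \<alpha> * t powr \<alpha>" unfolding a using bp tp by (simp add: powr_mult)
  moreover have "b powr \<alpha> * t powr \<alpha> \<le> b powr \<alpha> * (\<alpha> * t + (1 - \<alpha>))"
    by (rule mult_left_mono[OF y']) simp
  moreover have "b powr \<alpha> * (\<alpha> * t + (1 - \<alpha>)) - b powr \<alpha> = b powr \<alpha> * (\<alpha> * (t - 1))"
    by (simp add: algebra_simps)
  ultimately have "a powr \<alpha> - b powr \<alpha> \<le> b powr \<alpha> * (\<alpha> * (t - 1))"
    by linarith
  hence "(a powr \<alpha> - b powr \<alpha>) * b \<le> b powr \<alpha> * (\<alpha> * (t - 1)) * b"
    using bp by (intro mult_right_mono) auto
  also have "\<dots> = \<alpha> * b powr \<alpha> * (a - b)" unfolding a by (simp add: algebra_simps)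
  also have "\<dots> \<le> \<alpha> * a powr \<alpha> * (a - b)"
    using assms by (intro mult_right_mono mult_left_mono powr_mono2) auto
  finally show ?thesis .
qed

lemma inner_expand:
  fixes x y :: "real^'n" and p q a b :: real
  assumes xx: "x \<bullet> x = a^2" "y \<bullet> y = b^2"
  shows "norm (x - y) ^ 2 = a^2 - 2 * (x \<bullet> y) + b^2"
    and "(p *\<^sub>R x - q *\<^sub>R y) \<bullet> (x - y) = ((p + q)/2) * norm (x - y)^2 + ((p - q)/2) * (a^2 - b^2)"
proof -
  have yx: "y \<bullet> x = x \<bullet> y" by (rule inner_commute)
  show hh: "norm (x - y) ^ 2 = a^2 - 2 * (x \<bullet> y) + b^2"
    unfolding power2_norm_eq_inner inner_diff_left inner_diff_right yx xx by simp
  have "(p *\<^sub>R x - q *\<^sub>R y) \<bullet> (x - y) = p * a^2 - (p + q) * (x \<bullet> y) + q * b^2"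
    unfolding inner_diff_left inner_diff_right inner_scaleR_left yx xx by (simp add: algebra_simps)
  moreover have "((p + q)/2) * (a^2 - 2 * (x \<bullet> y) + b^2) + ((p - q)/2) * (a^2 - b^2) = p * a^2 - (p + q) * (x \<bullet> y) + q * b^2"
    by (simp add: field_simps)
  ultimately show "(p *\<^sub>R x - q *\<^sub>R y) \<bullet> (x - y) = ((p + q)/2) * norm (x - y)^2 + ((p - q)/2) * (a^2 - b^2)"
    unfolding hh by simp
qed
lemma plap_ineq:
  fixes x y :: "real^'n" and \<alpha> :: real
  assumes "\<alpha> > 0"
  shows "(norm x powr \<alpha> *\<^sub>R x - norm y powr \<alpha> *\<^sub>R y) \<bullet> (x - y)
     \<ge> (1/2) * (1/2) powr \<alpha> * norm (x - y) powr (\<alpha> + 2)"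
proof -
  define a b p q where "a = norm x" "b = norm y" "p = a powr \<alpha>" "q = b powr \<alpha>"
  have nn: "0 \<le> a" "0 \<le> b" "0 \<le> p" "0 \<le> q" unfolding a_b_p_q_def by auto
  have xx: "x \<bullet> x = a^2" "y \<bullet> y = b^2" unfolding a_b_p_q_def by (simp_all add: power2_norm_eq_inner)

  have G: "(p *\<^sub>R x - q *\<^sub>R y) \<bullet> (x - y) = ((p + q)/2) * norm (x - y)^2 + ((p - q)/2) * (a^2 - b^2)"
    by (rule inner_expand(2)[OF xx])
  have s: "(p - q) * (a^2 - b^2) \<ge> 0"
  proof (cases "a \<le> b")
    case True
    hence "p \<le> q" unfolding a_b_p_q_def using assms by (intro powr_mono2) auto
    moreover have "a^2 \<le> b^2" using True nn by (simp add: power_mono)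
    ultimately show ?thesis by (simp add: mult_nonpos_nonpos)
  next
    case False
    hence "q \<le> p" unfolding a_b_p_q_def using assms by (intro powr_mono2) auto
    moreover have "b^2 \<le> a^2" using False nn by (simp add: power_mono)
    ultimately show ?thesis by simp
  qed
  have hle: "norm (x - y) / 2 \<le> max a b"
    using norm_triangle_ineq4[of x y] unfolding a_b_p_q_def by linarith
  have "(norm (x - y) / 2) powr \<alpha> \<le> (max a b) powr \<alpha>"
    using hle assms by (intro powr_mono2) auto
  also have "\<dots> \<le> p + q"
  proof (cases "a \<le> b")
    case True then show ?thesis using nn unfolding a_b_p_q_def by (simp add: max_def)
  next
    case False then show ?thesis using nn unfolding a_b_p_q_def by (simp add: max_def)
  qed
  finally have pq0: "(norm (x - y) / 2) powr \<alpha> \<le> p + q" .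
  have "(norm (x - y) / 2) powr \<alpha> = ((1/2) * norm (x - y)) powr \<alpha>" by simp
  also have "\<dots> = (1/2) powr \<alpha> * norm (x - y) powr \<alpha>" by (rule powr_mult; simp)
  finally have pq: "(1/2) powr \<alpha> * norm (x - y) powr \<alpha> \<le> p + q" using pq0 by simp
  have "(1/2) * (1/2) powr \<alpha> * norm (x - y) powr (\<alpha> + 2)
      = (1/2) * ((1/2) powr \<alpha> * norm (x - y) powr \<alpha>) * norm (x - y)^2"
  proof (cases "x = y")
    case True then show ?thesis using assms by simp
  next
    case False
    hence np: "norm (x - y) > 0" by simp
    have "norm (x - y) powr (\<alpha> + 2) = norm (x - y) powr \<alpha> * norm (x - y) powr 2"
      by (rule powr_add)
    also have "norm (x - y) powr 2 = norm (x - y)^2" using np by (simp add: powr_numeral)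
    finally show ?thesis by simp
  qed
  also have "\<dots> \<le> (1/2) * (p + q) * norm (x - y)^2"
    using pq by (intro mult_right_mono mult_left_mono) auto
  also have "\<dots> = ((p + q)/2) * norm (x - y)^2" by simp
  also have "\<dots> \<le> (p *\<^sub>R x - q *\<^sub>R y) \<bullet> (x - y)" using G s by linarith
  finally have fin: "(1/2) * (1/2) powr \<alpha> * norm (x - y) powr (\<alpha> + 2) \<le> (p *\<^sub>R x - q *\<^sub>R y) \<bullet> (x - y)" .
  show ?thesis using fin unfolding a_b_p_q_def .
qed



lemma opnorm_ge:
  fixes A :: "real^'n^'n"
  assumes coer: "\<forall>u. u \<bullet> (A *v u) \<ge> K * (norm u)\<^sup>2"
  shows "K \<le> op_norm A"
proof -
  define e :: "real^'n" where "e = axis undefined 1"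
  have ne: "norm e = 1" unfolding e_def by simp
  have "K = K * (norm e)^2" using ne by simp
  also have "\<dots> \<le> e \<bullet> (A *v e)" using coer by simp
  also have "\<dots> \<le> norm e * norm (A *v e)" by (rule norm_cauchy_schwarz)
  also have "\<dots> \<le> op_norm A" using op_norm_bound[of A e] ne by simp
  finally show ?thesis .
qed

lemma part3_wlog:
  fixes A :: "real^'n^'n" and u v :: "real^'n"
  assumes coer: "\<forall>u. u \<bullet> (A *v u) \<ge> K * (norm u)\<^sup>2"
    and al: "0 < \<alpha>" "\<alpha> \<le> 1" and le: "norm v \<le> norm u"
  shows "(norm u powr \<alpha> *\<^sub>R (A *v u) - norm v powr \<alpha> *\<^sub>R (A *v v)) \<bullet> (u - v)
     \<ge> (K - \<alpha> * op_norm A) * norm u powr \<alpha> * (norm (u - v))\<^sup>2"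
proof -
  define a b h M where "a = norm u" "b = norm v" "h = u - v" "M = op_norm A"
  have nn: "0 \<le> a" "0 \<le> b" "b \<le> a" "a powr \<alpha> \<ge> b powr \<alpha>" "0 \<le> M"
    using le al unfolding a_b_h_M_def op_norm_def
    by (auto intro: powr_mono2 onorm_pos_le[OF matrix_vector_mul_bounded_linear])
  have eq: "a powr \<alpha> *\<^sub>R (A *v u) - b powr \<alpha> *\<^sub>R (A *v v)
        = a powr \<alpha> *\<^sub>R (A *v h) + (a powr \<alpha> - b powr \<alpha>) *\<^sub>R (A *v v)"
    unfolding a_b_h_M_def matrix_vector_mult_diff_distrib by (simp add: algebra_simps)
  have G: "(a powr \<alpha> *\<^sub>R (A *v u) - b powr \<alpha> *\<^sub>R (A *v v)) \<bullet> h
     = a powr \<alpha> * (h \<bullet> (A *v h)) + (a powr \<alpha> - b powr \<alpha>) * ((A *v v) \<bullet> h)"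
    unfolding eq inner_add_left inner_scaleR_left by (simp add: inner_commute)
  have t1: "h \<bullet> (A *v h) \<ge> K * (norm h)^2" using coer by simp
  have t2: "(A *v v) \<bullet> h \<ge> - (M * b * norm h)"
  proof -
    have "\<bar>(A *v v) \<bullet> h\<bar> \<le> norm (A *v v) * norm h" by (rule Cauchy_Schwarz_ineq2)
    also have "\<dots> \<le> M * b * norm h" unfolding a_b_h_M_def
      by (intro mult_right_mono op_norm_bound) auto
    finally show ?thesis by linarith
  qed
  have t3: "(a powr \<alpha> - b powr \<alpha>) * b \<le> \<alpha> * a powr \<alpha> * (a - b)"
    by (rule conc_ineq) (use al nn in auto)
  have t4: "a - b \<le> norm h" unfolding a_b_h_M_def using norm_triangle_ineq2[of u v] by simp
  have "(a powr \<alpha> - b powr \<alpha>) * ((A *v v) \<bullet> h) \<ge> (a powr \<alpha> - b powr \<alpha>) * (- (M * b * norm h))"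
    using t2 nn by (intro mult_left_mono) auto
  moreover have "(a powr \<alpha> - b powr \<alpha>) * (M * b * norm h) \<le> M * norm h * (\<alpha> * a powr \<alpha> * norm h)"
  proof -
    have "(a powr \<alpha> - b powr \<alpha>) * (M * b * norm h) = M * norm h * ((a powr \<alpha> - b powr \<alpha>) * b)"
      by (simp add: algebra_simps)
    also have "\<dots> \<le> M * norm h * (\<alpha> * a powr \<alpha> * (a - b))"
      using t3 nn by (intro mult_left_mono) auto
    also have "\<dots> \<le> M * norm h * (\<alpha> * a powr \<alpha> * norm h)"
      using t4 nn al by (intro mult_left_mono) auto
    finally show ?thesis .
  qed
  moreover have "a powr \<alpha> * (h \<bullet> (A *v h)) \<ge> a powr \<alpha> * (K * (norm h)^2)"
    using t1 by (intro mult_left_mono) auto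
  ultimately have "(a powr \<alpha> *\<^sub>R (A *v u) - b powr \<alpha> *\<^sub>R (A *v v)) \<bullet> h
      \<ge> a powr \<alpha> * (K * (norm h)^2) - M * norm h * (\<alpha> * a powr \<alpha> * norm h)"
    unfolding G by (simp add: algebra_simps)
  also have "a powr \<alpha> * (K * (norm h)^2) - M * norm h * (\<alpha> * a powr \<alpha> * norm h)
      = (K - \<alpha> * M) * a powr \<alpha> * (norm h)^2" by (simp add: algebra_simps power2_eq_square)
  finally show ?thesis unfolding a_b_h_M_def .
qed

lemma part3:
  fixes A :: "real^'n^'n" and u v :: "real^'n"
  assumes coer: "\<forall>u. u \<bullet> (A *v u) \<ge> K * (norm u)\<^sup>2"
    and al: "0 < \<alpha>" "\<alpha> \<le> 1" and KM: "\<alpha> * op_norm A \<le> K"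
  shows "(norm u powr \<alpha> *\<^sub>R (A *v u) - norm v powr \<alpha> *\<^sub>R (A *v v)) \<bullet> (u - v)
     \<ge> (K - \<alpha> * op_norm A) * (1/2) powr \<alpha> * norm (u - v) powr (\<alpha> + 2)"
proof -
  have main: "(norm u powr \<alpha> *\<^sub>R (A *v u) - norm v powr \<alpha> *\<^sub>R (A *v v)) \<bullet> (u - v)
     \<ge> (K - \<alpha> * op_norm A) * (1/2) powr \<alpha> * norm (u - v) powr (\<alpha> + 2)"
    if le: "norm v \<le> norm u" for u v :: "real^'n"
  proof -
    have w: "(norm u powr \<alpha> *\<^sub>R (A *v u) - norm v powr \<alpha> *\<^sub>R (A *v v)) \<bullet> (u - v)
     \<ge> (K - \<alpha> * op_norm A) * norm u powr \<alpha> * (norm (u - v))\<^sup>2"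
      by (rule part3_wlog[OF coer al le])
    have hu: "norm (u - v) / 2 \<le> norm u" using norm_triangle_ineq4[of u v] le by linarith
    have "(1/2) powr \<alpha> * norm (u - v) powr \<alpha> = ((1/2) * norm (u - v)) powr \<alpha>"
      by (rule powr_mult[symmetric]; simp)
    also have "\<dots> \<le> norm u powr \<alpha>" using hu al by (intro powr_mono2) auto
    finally have pw: "(1/2) powr \<alpha> * norm (u - v) powr \<alpha> \<le> norm u powr \<alpha>" .
    have "(K - \<alpha> * op_norm A) * (1/2) powr \<alpha> * norm (u - v) powr (\<alpha> + 2)
        = (K - \<alpha> * op_norm A) * ((1/2) powr \<alpha> * norm (u - v) powr \<alpha>) * (norm (u - v))\<^sup>2"
    proof (cases "u = v")
      case True then show ?thesis using al by simp
    next
      case False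
      hence np: "norm (u - v) > 0" by simp
      have "norm (u - v) powr (\<alpha> + 2) = norm (u - v) powr \<alpha> * norm (u - v) powr 2"
        by (rule powr_add)
      also have "norm (u - v) powr 2 = norm (u - v)^2" using np by (simp add: powr_numeral)
      finally show ?thesis by simp
    qed
    also have "\<dots> \<le> (K - \<alpha> * op_norm A) * norm u powr \<alpha> * (norm (u - v))\<^sup>2"
      using pw KM by (intro mult_right_mono mult_left_mono) auto
    finally show ?thesis using w by linarith
  qed
  show ?thesis
  proof (cases "norm v \<le> norm u")
    case True then show ?thesis by (rule main)
  next
    case False
    hence "norm u \<le> norm v" by simp
    from main[OF this] show ?thesis
      by (simp add: norm_minus_commute inner_diff_left inner_diff_right inner_commute algebra_simps)
  qed
qed



definition psd :: "real^'n^'n \<Rightarrow> bool" where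
  "psd X \<longleftrightarrow> (\<forall>x. 0 \<le> x \<bullet> (X *v x))"

lemma mat_eq_vec:
  fixes A B :: "real^'n^'m"
  assumes "\<And>x. A *v x = B *v x"
  shows "A = B"
proof -
  have "\<And>k. column k A = column k B" using assms[of "axis _ 1"] by (simp add: matrix_vector_mult_basis)
  thus ?thesis by (simp add: vec_eq_iff column_def)
qed

lemma transpose_add: "transpose (X + Y) = transpose X + transpose (Y :: real^'n^'m)"
  by (simp add: transpose_def vec_eq_iff)

lemma matrix_sub_ldistrib: "(A :: real^'n^'m) ** (B - C) = A ** B - A ** C"
  by (rule mat_eq_vec) (simp add: matrix_vector_mul_assoc[symmetric] matrix_vector_mult_diff_distrib matrix_vector_mult_diff_rdistrib)

lemma matrix_sub_rdistrib: "((A :: real^'n^'m) - B) ** C = A ** C - B ** C"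
  by (rule mat_eq_vec) (simp add: matrix_vector_mul_assoc[symmetric] matrix_vector_mult_diff_distrib matrix_vector_mult_diff_rdistrib)

lemma matrix_add_rdistrib': "((A :: real^'n^'m) + B) ** C = A ** C + B ** C"
  by (rule mat_eq_vec) (simp add: matrix_vector_mul_assoc[symmetric] matrix_vector_mult_add_rdistrib)

inductive_set npoly :: "real^'n^'n \<Rightarrow> (real^'n^'n) set" for B where
  np_one: "mat 1 \<in> npoly B"
| np_B: "X \<in> npoly B \<Longrightarrow> B ** X \<in> npoly B"
| np_add: "X \<in> npoly B \<Longrightarrow> Y \<in> npoly B \<Longrightarrow> X + Y \<in> npoly B"
| np_scale: "X \<in> npoly B \<Longrightarrow> 0 \<le> c \<Longrightarrow> c *\<^sub>R X \<in> npoly B"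

lemma np_zero: "0 \<in> npoly B"
  using np_scale[OF np_one, of 0 B] by simp

lemma np_Bmem: "B \<in> npoly B"
  using np_B[OF np_one, of B] by simp

lemma np_comm_B: "X \<in> npoly B \<Longrightarrow> B ** X = X ** B"
proof (induction rule: npoly.induct)
  case np_one then show ?case by simp
next
  case (np_B X) then show ?case by (simp add: matrix_mul_assoc)
next
  case (np_add X Y) then show ?case by (simp add: matrix_add_ldistrib matrix_add_rdistrib')
next
  case (np_scale X c) then show ?case by (simp add: matrix_scalar_ac scalar_matrix_assoc[symmetric])
qed

lemma np_mult: "X \<in> npoly B \<Longrightarrow> Y \<in> npoly B \<Longrightarrow> X ** Y \<in> npoly B"
proof (induction rule: npoly.induct)
  case np_one then show ?case by simp
next
  case (np_B X) then show ?case by (simp add: matrix_mul_assoc[symmetric] npoly.np_B)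
next
  case (np_add X Z) then show ?case by (simp add: matrix_add_rdistrib' npoly.np_add)
next
  case (np_scale X c) then show ?case by (simp add: scalar_matrix_assoc[symmetric] npoly.np_scale)
qed

lemma np_comm: "X \<in> npoly B \<Longrightarrow> Y \<in> npoly B \<Longrightarrow> X ** Y = Y ** X"
proof (induction rule: npoly.induct)
  case np_one then show ?case by simp
next
  case (np_B X)
  have "B ** X ** Y = B ** (X ** Y)" by (simp add: matrix_mul_assoc)
  also have "\<dots> = B ** (Y ** X)" using np_B by simp
  also have "\<dots> = (B ** Y) ** X" by (simp add: matrix_mul_assoc)
  also have "\<dots> = (Y ** B) ** X" using np_comm_B[OF np_B.prems] by simp
  also have "\<dots> = Y ** (B ** X)" by (simp add: matrix_mul_assoc)
  finally show ?case .
next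
  case (np_add X Z) then show ?case by (simp add: matrix_add_rdistrib' matrix_add_ldistrib)
next
  case (np_scale X c) then show ?case by (simp add: matrix_scalar_ac scalar_matrix_assoc[symmetric])
qed

lemma np_sym: assumes sB: "transpose B = B" shows "X \<in> npoly B \<Longrightarrow> transpose X = X"
proof (induction rule: npoly.induct)
  case np_one then show ?case by (simp add: transpose_mat)
next
  case (np_B X) then show ?case by (simp add: matrix_transpose_mul sB np_comm_B[OF np_B.hyps])
next
  case (np_add X Z) then show ?case by (simp add: transpose_add)
next
  case (np_scale X c) then show ?case by (simp add: transpose_scalar)
qed

lemma np_psd:
  assumes sB: "transpose B = B" and pB: "psd B"
  shows "X \<in> npoly B \<Longrightarrow> psd X \<and> psd (B ** X)"
proof (induction rule: npoly.induct)
  case np_one then show ?case using pB by (simp add: psd_def)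
next
  case (np_B X)
  have "psd (B ** (B ** X))"
    unfolding psd_def
  proof
    fix x
    have "x \<bullet> ((B ** (B ** X)) *v x) = x \<bullet> (B *v ((B ** X) *v x))"
      by (simp add: matrix_vector_mul_assoc)
    also have "\<dots> = (B *v x) \<bullet> ((B ** X) *v x)" using mv_inner_sym[OF sB] by simp
    also have "\<dots> = (B *v x) \<bullet> (X *v (B *v x))"
      by (simp add: np_comm_B[OF np_B.hyps] matrix_vector_mul_assoc)
    also have "\<dots> \<ge> 0" using np_B.IH by (simp add: psd_def)
    finally show "0 \<le> x \<bullet> ((B ** (B ** X)) *v x)" .
  qed
  then show ?case using np_B.IH by simp
next
  case (np_add X Z) then show ?case
    by (simp add: psd_def matrix_add_ldistrib matrix_vector_mult_add_rdistrib inner_add_right add_nonneg_nonneg)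
next
  case (np_scale X c) then show ?case
    by (simp add: psd_def matrix_scalar_ac scalar_matrix_assoc[symmetric] scaleR_matrix_vector_assoc[symmetric])
qed



primrec Yseq :: "real^'n^'n \<Rightarrow> nat \<Rightarrow> real^'n^'n" where
  "Yseq B 0 = 0"
| "Yseq B (Suc k) = (1/2) *\<^sub>R (B + Yseq B k ** Yseq B k)"

lemma Y_np: "Yseq B k \<in> npoly B \<and> Yseq B (Suc k) - Yseq B k \<in> npoly B"
proof (induction k)
  case 0
  have "Yseq B (Suc 0) - Yseq B 0 = (1/2) *\<^sub>R B" by (simp add: times0_right)
  then show ?case using np_zero np_scale[OF np_Bmem, of "1/2" B] by simp
next
  case (Suc k)
  define P Q where "P = Yseq B (Suc k)" "Q = Yseq B k"
  have Qm: "Q \<in> npoly B" and Dm: "P - Q \<in> npoly B" using Suc unfolding P_Q_def by auto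
  have Pm: "P \<in> npoly B" using Dm Qm np_add[OF Dm Qm] by simp
  have PQ: "P ** Q = Q ** P" by (rule np_comm[OF Pm Qm])
  have id: "(P - Q) ** (P + Q) = P ** P - Q ** Q"
    unfolding matrix_sub_rdistrib matrix_add_ldistrib PQ by (simp add: algebra_simps)
  have "Yseq B (Suc (Suc k)) - Yseq B (Suc k) = (1/2) *\<^sub>R (B + P ** P) - (1/2) *\<^sub>R (B + Q ** Q)"
    unfolding P_Q_def by simp
  also have "\<dots> = (1/2) *\<^sub>R ((P - Q) ** (P + Q))" unfolding id by (simp add: algebra_simps)
  finally have "Yseq B (Suc (Suc k)) - Yseq B (Suc k) \<in> npoly B"
    using np_scale[OF np_mult[OF Dm np_add[OF Pm Qm]], of "1/2"] by simp
  then show ?case using Pm unfolding P_Q_def by simp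
qed

lemma Y_norm:
  assumes nB: "\<forall>x. norm (B *v x) \<le> norm x"
  shows "norm (Yseq B k *v x) \<le> norm x"
proof (induction k arbitrary: x)
  case 0 then show ?case by (simp add: matrix_vector_mult_0)
next
  case (Suc k)
  have "Yseq B (Suc k) *v x = (1/2) *\<^sub>R (B *v x + Yseq B k *v (Yseq B k *v x))"
    by (simp add: scaleR_matrix_vector_assoc[symmetric] matrix_vector_mult_add_rdistrib matrix_vector_mul_assoc)
  hence "norm (Yseq B (Suc k) *v x) \<le> (1/2) * (norm (B *v x) + norm (Yseq B k *v (Yseq B k *v x)))"
    using norm_triangle_ineq[of "B *v x" "Yseq B k *v (Yseq B k *v x)"] by simp
  also have "\<dots> \<le> (1/2) * (norm x + norm x)"
    using nB Suc[of "Yseq B k *v x"] Suc[of x] by (intro mult_left_mono add_mono) auto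
  finally show ?case by simp
qed

lemma polarize:
  fixes M :: "real^'n^'n"
  assumes "transpose M = M"
  shows "x \<bullet> (M *v y) = ((x + y) \<bullet> (M *v (x + y)) - (x - y) \<bullet> (M *v (x - y))) / 4"
proof -
  have s: "y \<bullet> (M *v x) = x \<bullet> (M *v y)"
    using mv_inner_sym[OF assms, of x y] by (simp add: inner_commute)
  show ?thesis
    by (simp add: matrix_vector_right_distrib matrix_vector_mult_diff_distrib inner_add_left
        inner_add_right inner_diff_left inner_diff_right s)
qed

lemma entry_inner: "(M :: real^'n^'m) $ i $ j = axis i 1 \<bullet> (M *v axis j 1)"
  by (simp add: matrix_vector_mult_basis inner_axis' column_def)

lemma quad_tendsto:
  fixes M :: "nat \<Rightarrow> real^'n^'m"
  assumes "\<And>i j. (\<lambda>k. M k $ i $ j) \<longlonglongrightarrow> L $ i $ j"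
  shows "(\<lambda>k. x \<bullet> (M k *v y)) \<longlonglongrightarrow> x \<bullet> (L *v y)"
  unfolding inner_vec_def matrix_vector_mult_def inner_real_def
  by (simp, intro tendsto_intros assms)

lemma iter_limit:
  fixes B :: "real^'n^'n"
  assumes sB: "transpose B = B" and pB: "psd B" and nB: "\<forall>x. norm (B *v x) \<le> norm x"
  shows "\<exists>L. transpose L = L \<and> (\<forall>x. 0 \<le> x \<bullet> (L *v x) \<and> x \<bullet> (L *v x) \<le> (norm x)^2)
           \<and> L = (1/2) *\<^sub>R (B + L ** L)"
proof -
  let ?Y = "Yseq B"
  have symY: "transpose (?Y k) = ?Y k" for k using np_sym[OF sB] Y_np[of B k] by auto
  have psdY: "psd (?Y k)" for k using np_psd[OF sB pB] Y_np[of B k] by auto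
  have psdD: "psd (?Y (Suc k) - ?Y k)" for k using np_psd[OF sB pB] Y_np[of B k] by auto
  have qconv: "convergent (\<lambda>k. x \<bullet> (?Y k *v x))" for x
  proof -
    have inc: "incseq (\<lambda>k. x \<bullet> (?Y k *v x))"
    proof (rule incseq_SucI)
      fix k
      have "0 \<le> x \<bullet> ((?Y (Suc k) - ?Y k) *v x)" using psdD[of k] by (simp add: psd_def)
      thus "x \<bullet> (?Y k *v x) \<le> x \<bullet> (?Y (Suc k) *v x)"
        by (simp add: matrix_vector_mult_diff_rdistrib inner_diff_right)
    qed
    have bd: "\<forall>k. x \<bullet> (?Y k *v x) \<le> (norm x)^2"
    proof
      fix k
      have "x \<bullet> (?Y k *v x) \<le> norm x * norm (?Y k *v x)" by (rule norm_cauchy_schwarz)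
      also have "\<dots> \<le> norm x * norm x" using Y_norm[OF nB] by (intro mult_left_mono) auto
      finally show "x \<bullet> (?Y k *v x) \<le> (norm x)^2" by (simp add: power2_eq_square)
    qed
    obtain L where "(\<lambda>k. x \<bullet> (?Y k *v x)) \<longlonglongrightarrow> L" using incseq_convergent[OF inc bd] by blast
    thus ?thesis by (auto simp: convergent_def)
  qed
  have bconv: "convergent (\<lambda>k. x \<bullet> (?Y k *v y))" for x y
  proof -
    have eq: "(\<lambda>k. x \<bullet> (?Y k *v y)) = (\<lambda>k. ((x + y) \<bullet> (?Y k *v (x + y)) - (x - y) \<bullet> (?Y k *v (x - y))) / 4)"
      using polarize[OF symY] by auto
    obtain L1 L2 where "(\<lambda>k. (x + y) \<bullet> (?Y k *v (x + y))) \<longlonglongrightarrow> L1"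
        "(\<lambda>k. (x - y) \<bullet> (?Y k *v (x - y))) \<longlonglongrightarrow> L2"
      using qconv[of "x + y"] qconv[of "x - y"] by (auto simp: convergent_def)
    hence "(\<lambda>k. ((x + y) \<bullet> (?Y k *v (x + y)) - (x - y) \<bullet> (?Y k *v (x - y))) / 4) \<longlonglongrightarrow> (L1 - L2) / 4"
      by (intro tendsto_intros) auto
    thus ?thesis unfolding eq convergent_def by blast
  qed
  define L where "L = (\<chi> i j. lim (\<lambda>k. ?Y k $ i $ j))"
  have ent: "(\<lambda>k. ?Y k $ i $ j) \<longlonglongrightarrow> L $ i $ j" for i j
  proof -
    have "convergent (\<lambda>k. ?Y k $ i $ j)"
      unfolding entry_inner[of "?Y _" i j] by (rule bconv)
    thus ?thesis unfolding L_def by (simp add: convergent_LIMSEQ_iff)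
  qed
  have qlim: "(\<lambda>k. x \<bullet> (?Y k *v y)) \<longlonglongrightarrow> x \<bullet> (L *v y)" for x y
    by (rule quad_tendsto[OF ent])
  have symL: "transpose L = L"
  proof -
    have "L $ i $ j = L $ j $ i" for i j
    proof -
      have "?Y k $ i $ j = ?Y k $ j $ i" for k
        using symY[of k] by (simp add: transpose_def vec_eq_iff)
      hence "(\<lambda>k. ?Y k $ j $ i) \<longlonglongrightarrow> L $ i $ j" using ent[of i j] by simp
      thus ?thesis using ent[of j i] LIMSEQ_unique by blast
    qed
    thus ?thesis by (simp add: transpose_def vec_eq_iff)
  qed
  have bounds: "0 \<le> x \<bullet> (L *v x) \<and> x \<bullet> (L *v x) \<le> (norm x)^2" for x
  proof
    show "0 \<le> x \<bullet> (L *v x)"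
      by (rule LIMSEQ_le_const[OF qlim]) (use psdY in \<open>auto simp: psd_def\<close>)
    have "x \<bullet> (?Y k *v x) \<le> (norm x)^2" for k
    proof -
      have "x \<bullet> (?Y k *v x) \<le> norm x * norm (?Y k *v x)" by (rule norm_cauchy_schwarz)
      also have "\<dots> \<le> norm x * norm x" using Y_norm[OF nB] by (intro mult_left_mono) auto
      finally show ?thesis by (simp add: power2_eq_square)
    qed
    thus "x \<bullet> (L *v x) \<le> (norm x)^2"
      by (intro LIMSEQ_le_const2[OF qlim]) auto
  qed
  have eqL: "L = (1/2) *\<^sub>R (B + L ** L)"
  proof -
    have "L $ i $ j = (1/2) * (B $ i $ j + (\<Sum>l\<in>UNIV. L $ i $ l * L $ l $ j))" for i j
    proof -
      have e: "?Y (Suc k) $ i $ j = (1/2) * (B $ i $ j + (\<Sum>l\<in>UNIV. ?Y k $ i $ l * ?Y k $ l $ j))" for k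
        by (simp add: matrix_matrix_mult_def)
      have t1: "(\<lambda>k. ?Y (Suc k) $ i $ j) \<longlonglongrightarrow> L $ i $ j"
        using ent[of i j] by (rule LIMSEQ_Suc)
      have t2: "(\<lambda>k. (1/2) * (B $ i $ j + (\<Sum>l\<in>UNIV. ?Y k $ i $ l * ?Y k $ l $ j)))
          \<longlonglongrightarrow> (1/2) * (B $ i $ j + (\<Sum>l\<in>UNIV. L $ i $ l * L $ l $ j))"
        by (intro tendsto_intros ent)
      show ?thesis using t1 t2 unfolding e using LIMSEQ_unique by blast
    qed
    thus ?thesis by (simp add: vec_eq_iff matrix_matrix_mult_def)
  qed
  show ?thesis using symL bounds eqL by blast
qed



lemma semidef_zero:
  fixes C :: "real^'n^'n"
  assumes sC: "transpose C = C" and pC: "psd C" and z: "x \<bullet> (C *v x) = 0"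
  shows "C *v x = 0"
proof -
  define y where "y = C *v x"
  define p where "p = y \<bullet> y"
  define q where "q = y \<bullet> (C *v y)"
  have q0: "q \<ge> 0" using pC unfolding q_def psd_def by simp
  define t where "t = - p / (q + 1)"
  have s1: "x \<bullet> (C *v y) = p" unfolding p_def y_def
    using mv_inner_sym[OF sC, of x "C *v x"] by (simp add: inner_commute)
  have s2: "y \<bullet> (C *v x) = p" unfolding p_def y_def ..
  have "0 \<le> (x + t *\<^sub>R y) \<bullet> (C *v (x + t *\<^sub>R y))" using pC unfolding psd_def by simp
  also have "\<dots> = x \<bullet> (C *v x) + t * (x \<bullet> (C *v y)) + t * (y \<bullet> (C *v x)) + t * t * (y \<bullet> (C *v y))"
    by (simp add: matrix_vector_right_distrib matrix_vector_mult_scaleR inner_add_left inner_add_right algebra_simps)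
  also have "\<dots> = 2 * t * p + t^2 * q" unfolding s1 s2 z q_def[symmetric] by (simp add: power2_eq_square)
  finally have ineq: "0 \<le> 2 * t * p + t^2 * q" .
  have h1: "(q + 1) * t = - p" unfolding t_def using q0 by (simp add: field_simps)
  have "(q + 1)^2 * (2 * t * p + t^2 * q) = 2 * p * (q + 1) * ((q + 1) * t) + q * ((q + 1) * t)^2"
    by (simp add: power2_eq_square algebra_simps)
  also have "\<dots> = - (p^2 * (q + 2))" unfolding h1 by (simp add: power2_eq_square algebra_simps)
  finally have "(q + 1)^2 * (2 * t * p + t^2 * q) = - (p^2 * (q + 2))" .
  moreover have "0 \<le> (q + 1)^2 * (2 * t * p + t^2 * q)" using ineq by simp
  ultimately have "p^2 * (q + 2) \<le> 0" by linarith
  moreover have "q + 2 > 0" using q0 by simp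
  ultimately have "p^2 \<le> 0" by (simp add: mult_le_0_iff)
  hence "p = 0" by simp
  thus ?thesis unfolding p_def y_def by simp
qed

lemma transpose_diff: "transpose (X - Y) = transpose X - transpose (Y :: real^'n^'m)"
  by (simp add: transpose_def vec_eq_iff)

lemma sqrt_exists:
  fixes A :: "real^'n^'n"
  assumes sA: "transpose A = A" and coer: "\<forall>u. u \<bullet> (A *v u) \<ge> K * (norm u)\<^sup>2" and K: "K > 0"
  shows "\<exists>R. sym_pos_def R \<and> R ** R = A"
proof -
  define M where "M = op_norm A"
  have MK: "K \<le> M" unfolding M_def by (rule opnorm_ge[OF coer])
  hence Mp: "M > 0" using K by simp
  define c where "c = M + M^2 / K"
  have cp: "c > 0" unfolding c_def using Mp K by (simp add: add_pos_pos)
  define d where "d = 1 / c"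
  have dp: "d > 0" unfolding d_def using cp by simp
  have dM: "d * M \<le> 1"
  proof -
    have "M \<le> c" unfolding c_def using K by simp
    thus ?thesis unfolding d_def using cp by (simp add: field_simps)
  qed
  have dM2: "d * M^2 \<le> K"
  proof -
    have "M^2 / K \<le> c" unfolding c_def using Mp by simp
    hence "M^2 \<le> c * K" using K by (simp add: field_simps)
    thus ?thesis unfolding d_def using cp K by (simp add: field_simps)
  qed
  define B where "B = mat 1 - d *\<^sub>R A"
  have Bx: "B *v x = x - d *\<^sub>R (A *v x)" for x
    unfolding B_def by (simp add: matrix_vector_mult_diff_rdistrib scaleR_matrix_vector_assoc[symmetric])
  have sB: "transpose B = B" unfolding B_def by (simp add: transpose_diff transpose_mat transpose_scalar sA)
  have Abd: "x \<bullet> (A *v x) \<le> M * (norm x)^2" for x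
  proof -
    have "x \<bullet> (A *v x) \<le> norm x * norm (A *v x)" by (rule norm_cauchy_schwarz)
    also have "\<dots> \<le> norm x * (M * norm x)" unfolding M_def by (intro mult_left_mono op_norm_bound) auto
    finally show ?thesis by (simp add: power2_eq_square mult_ac)
  qed
  have pB: "psd B" unfolding psd_def
  proof
    fix x
    have "x \<bullet> (B *v x) = (norm x)^2 - d * (x \<bullet> (A *v x))"
      unfolding Bx by (simp add: inner_diff_right power2_norm_eq_inner)
    also have "\<dots> \<ge> (norm x)^2 - d * (M * (norm x)^2)" using Abd[of x] dp by (simp add: mult_left_mono)
    also have "(norm x)^2 - d * (M * (norm x)^2) = (1 - d * M) * (norm x)^2" by (simp add: algebra_simps)
    also have "\<dots> \<ge> 0" using dM by simp
    finally show "0 \<le> x \<bullet> (B *v x)" .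
  qed
  have nB: "\<forall>x. norm (B *v x) \<le> norm x"
  proof
    fix x
    define t where "t = x \<bullet> (A *v x)"
    have t1: "t \<ge> K * (norm x)^2" using coer unfolding t_def by simp
    have t2: "(norm (A *v x))^2 \<le> M^2 * (norm x)^2"
    proof -
      have "norm (A *v x) \<le> M * norm x" unfolding M_def by (rule op_norm_bound)
      hence "(norm (A *v x))^2 \<le> (M * norm x)^2" by (intro power_mono) auto
      thus ?thesis by (simp add: power_mult_distrib)
    qed
    have "(norm (B *v x))^2 = (norm x)^2 - 2 * d * t + d^2 * (norm (A *v x))^2"
      unfolding Bx t_def power2_norm_eq_inner
      by (simp add: inner_diff_left inner_diff_right inner_commute algebra_simps power2_eq_square)
    also have "\<dots> \<le> (norm x)^2 - 2 * d * (K * (norm x)^2) + d^2 * (M^2 * (norm x)^2)"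
      using t1 t2 dp by (intro add_mono diff_mono mult_left_mono) auto
    also have "\<dots> = (norm x)^2 - d * (norm x)^2 * (2 * K - d * M^2)" by (simp add: algebra_simps power2_eq_square)
    also have "\<dots> \<le> (norm x)^2"
    proof -
      have "0 \<le> d * (norm x)^2 * (2 * K - d * M^2)" using dp dM2 K by simp
      thus ?thesis by linarith
    qed
    finally show "norm (B *v x) \<le> norm x" by (rule power2_le_imp_le) simp
  qed
  obtain L where symL: "transpose L = L" and bds: "\<forall>x. 0 \<le> x \<bullet> (L *v x) \<and> x \<bullet> (L *v x) \<le> (norm x)^2"
    and eqL: "L = (1/2) *\<^sub>R (B + L ** L)"
    using iter_limit[OF sB pB nB] by blast
  define S where "S = mat 1 - L"
  have Sx: "S *v x = x - L *v x" for x unfolding S_def by (simp add: matrix_vector_mult_diff_rdistrib)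
  have LL: "L *v (L *v x) = 2 *\<^sub>R (L *v x) - B *v x" for x
  proof -
    have "L *v x = (1/2) *\<^sub>R (B *v x + L *v (L *v x))"
      by (subst eqL) (simp add: scaleR_matrix_vector_assoc[symmetric] matrix_vector_mult_add_rdistrib matrix_vector_mul_assoc)
    hence "2 *\<^sub>R (L *v x) = 2 *\<^sub>R ((1/2) *\<^sub>R (B *v x + L *v (L *v x)))"
      by (rule arg_cong[of _ _ "\<lambda>v. 2 *\<^sub>R v"])
    also have "\<dots> = B *v x + L *v (L *v x)" by (simp only: scaleR_scaleR) simp
    finally have h: "2 *\<^sub>R (L *v x) = B *v x + L *v (L *v x)" .
    have "L *v (L *v x) = (B *v x + L *v (L *v x)) - B *v x" by simp
    also have "\<dots> = 2 *\<^sub>R (L *v x) - B *v x" unfolding h ..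
    finally show ?thesis .
  qed
  have SS: "S *v (S *v x) = d *\<^sub>R (A *v x)" for x
    unfolding Sx matrix_vector_mult_diff_distrib LL Bx by (simp add: vec_eq_iff algebra_simps)
  have symS: "transpose S = S" unfolding S_def by (simp add: transpose_diff transpose_mat symL)
  have psdS: "psd S" unfolding psd_def Sx
    using bds by (simp add: inner_diff_right power2_norm_eq_inner)
  have pdS: "x \<bullet> (S *v x) > 0" if "x \<noteq> 0" for x
  proof (rule ccontr)
    assume "\<not> x \<bullet> (S *v x) > 0"
    hence "x \<bullet> (S *v x) = 0" using psdS unfolding psd_def by (meson not_le order_antisym)
    hence "S *v x = 0" by (rule semidef_zero[OF symS psdS])
    hence "d *\<^sub>R (A *v x) = 0" using SS[of x] by (simp add: matrix_vector_mult_0_right)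
    hence "A *v x = 0" using dp by simp
    hence "x \<bullet> (A *v x) = 0" by simp
    moreover have "K * (norm x)^2 > 0" using K that by simp
    ultimately show False using coer by (metis not_le)
  qed
  define R where "R = sqrt c *\<^sub>R S"
  have "sym_pos_def R"
    unfolding sym_pos_def_def R_def
    using symS pdS cp by (simp add: transpose_scalar scaleR_matrix_vector_assoc[symmetric])
  moreover have "R ** R = A"
  proof (rule mat_eq_vec)
    fix x
    have "(R ** R) *v x = c *\<^sub>R (S *v (S *v x))"
      unfolding R_def using cp
      by (simp add: matrix_vector_mul_assoc[symmetric] scaleR_matrix_vector_assoc[symmetric] matrix_vector_mult_scaleR)
    also have "\<dots> = A *v x" unfolding SS d_def using cp by simp
    finally show "(R ** R) *v x = A *v x" .
  qed
  ultimately show ?thesis by blast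
qed



lemma trace_sandwich:
  fixes D M :: "real^'n^'n"
  assumes sD: "transpose D = D"
  shows "trace (D ** M ** D) = (\<Sum>j\<in>UNIV. (D *v axis j 1) \<bullet> (M *v (D *v axis j 1)))"
proof -
  have Dsym: "D $ i $ j = D $ j $ i" for i j
    using sD by (metis transpose_def vec_lambda_beta)
  have "trace (D ** M ** D) = (\<Sum>j\<in>UNIV. \<Sum>k\<in>UNIV. \<Sum>l\<in>UNIV. D $ j $ l * M $ l $ k * D $ k $ j)"
    by (simp add: trace_def matrix_matrix_mult_def sum_distrib_right)
  also have "\<dots> = (\<Sum>j\<in>UNIV. \<Sum>l\<in>UNIV. \<Sum>k\<in>UNIV. D $ l $ j * M $ l $ k * D $ k $ j)"
    by (rule sum.cong[OF refl], subst sum.swap, simp add: Dsym[of _ "_ :: 'n"])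
  also have "\<dots> = (\<Sum>j\<in>UNIV. (D *v axis j 1) \<bullet> (M *v (D *v axis j 1)))"
    unfolding matrix_vector_mult_basis
    by (simp add: column_def matrix_vector_mult_def inner_vec_def sum_distrib_left mult_ac)
  finally show ?thesis .
qed



lemma sqrt_unique:
  fixes B C :: "real^'n^'n"
  assumes pB: "sym_pos_def B" and pC: "sym_pos_def C" and eq: "B ** B = C ** C"
  shows "B = C"
proof -
  define D where "D = B - C"
  have sB: "transpose B = B" and sC: "transpose C = C" using pB pC by (auto simp: sym_pos_def_def)
  have sD: "transpose D = D" unfolding D_def by (simp add: transpose_diff sB sC)
  have E: "B ** D + D ** C = 0"
    unfolding D_def matrix_sub_ldistrib matrix_sub_rdistrib eq by simp
  have "D ** (B ** D + D ** C) = 0" unfolding E by (rule times0_right)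
  hence "D ** (B ** D) + D ** (D ** C) = 0" by (simp add: matrix_add_ldistrib)
  hence "trace (D ** (B ** D) + D ** (D ** C)) = trace (0 :: real^'n^'n)" by (rule arg_cong)
  moreover have t0: "trace (0 :: real^'n^'n) = 0" by (simp add: trace_def)
  ultimately have "trace (D ** (B ** D)) + trace (D ** (D ** C)) = 0"
    by (simp only: trace_add)
  moreover have "trace (D ** (D ** C)) = trace (D ** C ** D)"
    using trace_mul_sym[of D "D ** C"] by simp
  ultimately have tz: "trace (D ** B ** D) + trace (D ** C ** D) = 0"
    by (simp add: matrix_mul_assoc)
  define d where "d j = D *v axis j 1" for j
  have nnB: "0 \<le> d j \<bullet> (B *v d j)" for j
    using pB by (cases "d j = 0") (auto simp: sym_pos_def_def intro: less_imp_le)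
  have nnC: "0 \<le> d j \<bullet> (C *v d j)" for j
    using pC by (cases "d j = 0") (auto simp: sym_pos_def_def intro: less_imp_le)
  have t1: "trace (D ** B ** D) = (\<Sum>j\<in>UNIV. d j \<bullet> (B *v d j))"
    unfolding d_def by (rule trace_sandwich[OF sD])
  have t2: "trace (D ** C ** D) = (\<Sum>j\<in>UNIV. d j \<bullet> (C *v d j))"
    unfolding d_def by (rule trace_sandwich[OF sD])
  have s1: "0 \<le> (\<Sum>j\<in>UNIV. d j \<bullet> (B *v d j))" using nnB by (simp add: sum_nonneg)
  have s2: "0 \<le> (\<Sum>j\<in>UNIV. d j \<bullet> (C *v d j))" using nnC by (simp add: sum_nonneg)
  have "(\<Sum>j\<in>UNIV. d j \<bullet> (B *v d j)) = 0" using tz t1 t2 s1 s2 by linarith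
  hence z: "d j \<bullet> (B *v d j) = 0" for j using nnB sum_nonneg_eq_0_iff[of UNIV "\<lambda>j. d j \<bullet> (B *v d j)"] by auto
  have dz: "d j = 0" for j
  proof (rule ccontr)
    assume "d j \<noteq> 0"
    hence "0 < d j \<bullet> (B *v d j)" using pB by (simp add: sym_pos_def_def)
    thus False using z[of j] by simp
  qed
  have "D $ i $ j = 0" for i j
    using dz[of j] unfolding entry_inner[of D i j] d_def by simp
  hence "D = 0" by (simp add: vec_eq_iff)
  thus ?thesis unfolding D_def by simp
qed

lemma matrix_sqrt_prop:
  fixes A :: "real^'n^'n"
  assumes sA: "transpose A = A" and coer: "\<forall>u. u \<bullet> (A *v u) \<ge> K * (norm u)\<^sup>2" and K: "K > 0"
  shows "sym_pos_def (matrix_sqrt A) \<and> matrix_sqrt A ** matrix_sqrt A = A"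
proof -
  have "\<exists>!R. sym_pos_def R \<and> R ** R = A"
    using sqrt_exists[OF sA coer K] sqrt_unique by blast
  thus ?thesis unfolding matrix_sqrt_def by (rule theI')
qed

lemma norm_powr2: "norm (x :: real^'n) powr 2 = (norm x)^2"
  by (cases "x = 0") (simp_all add: powr_numeral)

theorem mainTheorem10:
  fixes A :: "real^'n^'n" and \<kappa>0 :: real
  assumes k0: "\<kappa>0 > 0"
    and coer: "\<forall>u. u \<bullet> (A *v u) \<ge> \<kappa>0\<^sup>2 * (norm u)\<^sup>2"
  shows "beta_monotone 2 (\<lambda>u. A *v u)
    \<and> (\<forall>\<alpha>>0. transpose A = A \<longrightarrow>
          beta_monotone (\<alpha> + 2) (\<lambda>u. norm (matrix_sqrt A *v u) powr \<alpha> *\<^sub>R (A *v u)))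
    \<and> (\<forall>\<alpha>>0. \<alpha> = \<kappa>0\<^sup>2 / op_norm A \<longrightarrow>
          monotone_map (\<lambda>u. norm u powr \<alpha> *\<^sub>R (A *v u)))
    \<and> (\<forall>\<alpha>>0. \<alpha> < \<kappa>0\<^sup>2 / op_norm A \<longrightarrow>
          beta_monotone (\<alpha> + 2) (\<lambda>u. norm u powr \<alpha> *\<^sub>R (A *v u)))"
proof -
  define K where "K = \<kappa>0\<^sup>2"
  have Kp: "K > 0" unfolding K_def using k0 by simp
  have coerK: "\<forall>u. u \<bullet> (A *v u) \<ge> K * (norm u)\<^sup>2" using coer unfolding K_def .
  define M where "M = op_norm A"
  have MK: "K \<le> M" unfolding M_def by (rule opnorm_ge[OF coerK])
  have Mp: "M > 0" using MK Kp by simp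
  have P1: "beta_monotone 2 (\<lambda>u. A *v u)"
    unfolding beta_monotone_def
  proof (intro exI[of _ K] conjI allI)
    show "K > 0" by (rule Kp)
    fix u v :: "real^'n"
    have "(A *v u - A *v v) \<bullet> (u - v) = (u - v) \<bullet> (A *v (u - v))"
      by (simp add: matrix_vector_mult_diff_distrib inner_commute)
    also have "\<dots> \<ge> K * (norm (u - v))\<^sup>2" using coerK by simp
    finally show "K * norm (u - v) powr 2 \<le> (A *v u - A *v v) \<bullet> (u - v)" by (simp add: norm_powr2)
  qed
  have P2: "beta_monotone (\<alpha> + 2) (\<lambda>u. norm (matrix_sqrt A *v u) powr \<alpha> *\<^sub>R (A *v u))"
    if al: "\<alpha> > 0" and sA: "transpose A = A" for \<alpha>
  proof -
    define S where "S = matrix_sqrt A"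
    have SP: "sym_pos_def S" and SS: "S ** S = A"
      using matrix_sqrt_prop[OF sA coerK Kp] unfolding S_def by auto
    have sS: "transpose S = S" using SP by (simp add: sym_pos_def_def)
    have Au: "A *v u = S *v (S *v u)" for u unfolding SS[symmetric] by (simp add: matrix_vector_mul_assoc)
    show ?thesis unfolding beta_monotone_def S_def[symmetric]
    proof (intro exI[of _ "(1/2) * (1/2) powr \<alpha> * \<kappa>0 powr (\<alpha> + 2)"] conjI allI)
      show "0 < (1/2) * (1/2) powr \<alpha> * \<kappa>0 powr (\<alpha> + 2)" using k0 by simp
      fix u v :: "real^'n"
      define x y where "x = S *v u" "y = S *v v"
      have Fu: "norm (S *v u) powr \<alpha> *\<^sub>R (A *v u) = S *v (norm x powr \<alpha> *\<^sub>R x)"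
        unfolding Au x_y_def by (simp add: matrix_vector_mult_scaleR)
      have Fv: "norm (S *v v) powr \<alpha> *\<^sub>R (A *v v) = S *v (norm y powr \<alpha> *\<^sub>R y)"
        unfolding Au x_y_def by (simp add: matrix_vector_mult_scaleR)
      have G: "(norm (S *v u) powr \<alpha> *\<^sub>R (A *v u) - norm (S *v v) powr \<alpha> *\<^sub>R (A *v v)) \<bullet> (u - v)
          = (norm x powr \<alpha> *\<^sub>R x - norm y powr \<alpha> *\<^sub>R y) \<bullet> (x - y)"
        unfolding Fu Fv matrix_vector_mult_diff_distrib[symmetric] mv_inner_sym[OF sS]
        unfolding x_y_def matrix_vector_mult_diff_distrib ..
      have nS: "\<kappa>0 * norm (u - v) \<le> norm (x - y)"
      proof -
        have "(norm (x - y))^2 = (u - v) \<bullet> (A *v (u - v))"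
          unfolding x_y_def matrix_vector_mult_diff_distrib[symmetric] power2_norm_eq_inner
            mv_inner_sym[OF sS] Au ..
        also have "\<dots> \<ge> (\<kappa>0 * norm (u - v))^2" using coer by (simp add: power_mult_distrib)
        finally show ?thesis by (rule power2_le_imp_le) simp
      qed
      have "(1/2) * (1/2) powr \<alpha> * \<kappa>0 powr (\<alpha> + 2) * norm (u - v) powr (\<alpha> + 2)
          = (1/2) * (1/2) powr \<alpha> * (\<kappa>0 * norm (u - v)) powr (\<alpha> + 2)"
        using k0 by (simp add: powr_mult)
      also have "\<dots> \<le> (1/2) * (1/2) powr \<alpha> * norm (x - y) powr (\<alpha> + 2)"
        using nS k0 al by (intro mult_left_mono powr_mono2) auto
      also have "\<dots> \<le> (norm x powr \<alpha> *\<^sub>R x - norm y powr \<alpha> *\<^sub>R y) \<bullet> (x - y)"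
        by (rule plap_ineq[OF al])
      finally show "(1/2) * (1/2) powr \<alpha> * \<kappa>0 powr (\<alpha> + 2) * norm (u - v) powr (\<alpha> + 2)
          \<le> (norm (S *v u) powr \<alpha> *\<^sub>R (A *v u) - norm (S *v v) powr \<alpha> *\<^sub>R (A *v v)) \<bullet> (u - v)"
        unfolding G .
    qed
  qed
  have P3: "monotone_map (\<lambda>u. norm u powr \<alpha> *\<^sub>R (A *v u))"
    if al: "\<alpha> > 0" and ae: "\<alpha> = \<kappa>0\<^sup>2 / op_norm A" for \<alpha>
  proof -
    have aM: "\<alpha> * M = K" using ae Mp unfolding K_def M_def by simp
    have a1: "\<alpha> \<le> 1" using aM MK Mp al
      by (metis mult_le_cancel_right2 order_trans)
    show ?thesis unfolding monotone_map_def
    proof (intro allI)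
      fix u v :: "real^'n"
      show "0 \<le> (norm u powr \<alpha> *\<^sub>R (A *v u) - norm v powr \<alpha> *\<^sub>R (A *v v)) \<bullet> (u - v)"
        using part3[OF coerK al a1, of u v] aM unfolding M_def by simp
    qed
  qed
  have P4: "beta_monotone (\<alpha> + 2) (\<lambda>u. norm u powr \<alpha> *\<^sub>R (A *v u))"
    if al: "\<alpha> > 0" and ae: "\<alpha> < \<kappa>0\<^sup>2 / op_norm A" for \<alpha>
  proof -
    have aM: "\<alpha> * M < K" using ae Mp unfolding K_def M_def by (simp add: field_simps)
    have a1: "\<alpha> \<le> 1" using aM MK Mp al
      by (metis less_le_not_le mult_le_cancel_right2 nle_le order_trans)
    show ?thesis unfolding beta_monotone_def
    proof (intro exI[of _ "(K - \<alpha> * M) * (1/2) powr \<alpha>"] conjI allI)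
      show "0 < (K - \<alpha> * M) * (1/2) powr \<alpha>" using aM by simp
      fix u v :: "real^'n"
      show "(K - \<alpha> * M) * (1/2) powr \<alpha> * norm (u - v) powr (\<alpha> + 2)
          \<le> (norm u powr \<alpha> *\<^sub>R (A *v u) - norm v powr \<alpha> *\<^sub>R (A *v v)) \<bullet> (u - v)"
        using part3[OF coerK al a1, of u v] aM unfolding M_def by simp
    qed
  qed
  show ?thesis using P1 P2 P3 P4 by blast
qed

end
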